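(* Let $T>0$. Let $B_1,B_2,d_1,d_2$ be nonnegative functions of $(t,x)\in\mathbb{R}\times[0,\infty)$, $T$-periodic in $t$. Suppose that for $k=1,2$ there exist a real $\mu_k$ and a positive function $\phi^k$, $T$-periodic in $t$, such that $$-\partial_t\phi^k(t,x)-\partial_x\phi^k(t,x)+[d_k(t,x)+\mu_k]\phi^k(t,x)\geq B_k(t,x)\,\phi^k(t,0).$$ For $\theta\in[0,1]$ let $\phi^\theta=(\phi^1)^\theta(\phi^2)^{1-\theta}$, $B^\theta=B_1^\theta B_2^{1-\theta}$ and $d^\theta=\theta d_1+(1-\theta)d_2$. Then $\phi^\theta$ is positive, $T$-periodic in $t$, and $$-\partial_t\phi^\theta(t,x)-\partial_x\phi^\theta(t,x)+[\theta\mu_1+(1-\theta)\mu_2+d^\theta(t,x)]\phi^\theta(t,x)\geq B^\theta(t,x)\,\phi^\theta(t,0).$$ *)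

theory Defs
  imports "HOL-Analysis.Analysis"
begin

text \<open>Real power with the convention 0^0 = 1 (Isabelle's powr has 0 powr 0 = 0).\<close>
definition rpow :: "real \<Rightarrow> real \<Rightarrow> real" where
  "rpow a e = (if e = 0 then 1 else a powr e)"

definition has_partial_t :: "(real \<Rightarrow> real \<Rightarrow> real) \<Rightarrow> real \<Rightarrow> real \<Rightarrow> real \<Rightarrow> bool" where
  "has_partial_t f t x D \<longleftrightarrow> ((\<lambda>s. f s x) has_real_derivative D) (at t)"

definition has_partial_x :: "(real \<Rightarrow> real \<Rightarrow> real) \<Rightarrow> real \<Rightarrow> real \<Rightarrow> real \<Rightarrow> bool" where
  "has_partial_x f t x D \<longleftrightarrow> ((\<lambda>y. f t y) has_real_derivative D) (at x within {0..})"

end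

theory Submission
  imports Defs
begin


lemma rpow_pos: "a > 0 \<Longrightarrow> rpow a e = a powr e"
  by (simp add: rpow_def)

lemma rpow_mult: "0 \<le> a \<Longrightarrow> 0 \<le> b \<Longrightarrow> rpow (a * b) e = rpow a e * rpow b e"
  by (simp add: rpow_def powr_mult)

lemma rpow_nonneg: "0 \<le> rpow a e"
  by (simp add: rpow_def)

lemma amgm:
  fixes u v w :: real
  assumes "0 \<le> u" "0 \<le> v" "0 \<le> w" "w \<le> 1"
  shows "rpow u w * rpow v (1 - w) \<le> w * u + (1-w) * v"
proof (cases "w = 0 \<or> w = 1")
  case True then show ?thesis using assms by (auto simp: rpow_def)
next
  case False
  then have w: "0 < w" "w < 1" using assms by auto
  show ?thesis
  proof (cases "u = 0 \<or> v = 0")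
    case True then show ?thesis using assms w by (auto simp: rpow_def)
  next
    case False
    then show ?thesis using Youngs_inequality_0[of w "1-w" u v] assms w by (simp add: rpow_def)
  qed
qed

lemma deriv_geo:
  fixes f g :: "real \<Rightarrow> real"
  assumes f: "(f has_real_derivative a) (at x within S)"
    and g: "(g has_real_derivative b) (at x within S)"
    and xS: "x \<in> S" and pos: "\<And>y. y \<in> S \<Longrightarrow> f y > 0 \<and> g y > 0"
  shows "((\<lambda>y. rpow (f y) w * rpow (g y) (1-w)) has_real_derivative
           (w * a/f x + (1-w) * b/g x) * (rpow (f x) w * rpow (g x) (1-w))) (at x within S)"
proof -
  have fx: "f x > 0" and gx: "g x > 0" using pos xS by auto
  have d1: "((\<lambda>y. f y powr w) has_real_derivative (w * f x powr (w - 1)) * a) (at x within S)"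
    by (rule DERIV_chain2[OF has_real_derivative_powr[OF fx] f])
  have d2: "((\<lambda>y. g y powr (1-w)) has_real_derivative ((1-w) * g x powr ((1-w) - 1)) * b) (at x within S)"
    by (rule DERIV_chain2[OF has_real_derivative_powr[OF gx] g])
  have d: "((\<lambda>y. f y powr w * g y powr (1-w)) has_real_derivative
     f x powr w * (((1-w) * g x powr ((1-w) - 1)) * b) + (w * f x powr (w - 1)) * a * g x powr (1-w)) (at x within S)"
    by (rule DERIV_mult'[OF d1 d2])
  have e: "f x powr w * (((1-w) * g x powr ((1-w) - 1)) * b) + (w * f x powr (w - 1)) * a * g x powr (1-w)
      = (w * a/f x + (1-w) * b/g x) * (rpow (f x) w * rpow (g x) (1-w))"
  proof -
    have p1: "f x powr (w - 1) = f x powr w / f x" using powr_diff[of "f x" w 1] fx by simp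
    have p2: "g x powr ((1-w) - 1) = g x powr (1-w) / g x" using powr_diff[of "g x" "1-w" 1] gx by simp
    show ?thesis unfolding p1 p2 using fx gx by (simp add: rpow_pos field_simps)
  qed
  show ?thesis
    apply (rule has_field_derivative_transform_within[OF d[unfolded e], of 1])
    using xS pos by (auto simp: rpow_pos)
qed

theorem lemma1p1:
  fixes T \<mu>1 \<mu>2 \<theta> :: real
    and B1 B2 d1 d2 \<phi>1 \<phi>2 :: "real \<Rightarrow> real \<Rightarrow> real"
  assumes T_pos: "T > 0"
    and nonneg: "\<And>t x. x \<ge> 0 \<Longrightarrow>
           B1 t x \<ge> 0 \<and> B2 t x \<ge> 0 \<and> d1 t x \<ge> 0 \<and> d2 t x \<ge> 0"
    and per: "\<And>t x. x \<ge> 0 \<Longrightarrow>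
           B1 (t + T) x = B1 t x \<and> B2 (t + T) x = B2 t x \<and>
           d1 (t + T) x = d1 t x \<and> d2 (t + T) x = d2 t x"
    and \<phi>_pos: "\<And>t x. x \<ge> 0 \<Longrightarrow> \<phi>1 t x > 0 \<and> \<phi>2 t x > 0"
    and \<phi>_per: "\<And>t x. x \<ge> 0 \<Longrightarrow> \<phi>1 (t + T) x = \<phi>1 t x \<and> \<phi>2 (t + T) x = \<phi>2 t x"
    and ineq1: "\<And>t x. x \<ge> 0 \<Longrightarrow> \<exists>Dt Dx. has_partial_t \<phi>1 t x Dt \<and> has_partial_x \<phi>1 t x Dx \<and>
           - Dt - Dx + (d1 t x + \<mu>1) * \<phi>1 t x \<ge> B1 t x * \<phi>1 t 0"
    and ineq2: "\<And>t x. x \<ge> 0 \<Longrightarrow> \<exists>Dt Dx. has_partial_t \<phi>2 t x Dt \<and> has_partial_x \<phi>2 t x Dx \<and>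
           - Dt - Dx + (d2 t x + \<mu>2) * \<phi>2 t x \<ge> B2 t x * \<phi>2 t 0"
    and \<theta>: "0 \<le> \<theta>" "\<theta> \<le> 1"
  shows "let \<phi>\<theta> = (\<lambda>t x. rpow (\<phi>1 t x) \<theta> * rpow (\<phi>2 t x) (1 - \<theta>));
             B\<theta> = (\<lambda>t x. rpow (B1 t x) \<theta> * rpow (B2 t x) (1 - \<theta>));
             d\<theta> = (\<lambda>t x. \<theta> * d1 t x + (1 - \<theta>) * d2 t x)
         in (\<forall>t x. x \<ge> 0 \<longrightarrow> \<phi>\<theta> t x > 0 \<and> \<phi>\<theta> (t + T) x = \<phi>\<theta> t x) \<and>
            (\<forall>t x. x \<ge> 0 \<longrightarrow> (\<exists>Dt Dx. has_partial_t \<phi>\<theta> t x Dt \<and> has_partial_x \<phi>\<theta> t x Dx \<and>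
               - Dt - Dx + (\<theta> * \<mu>1 + (1 - \<theta>) * \<mu>2 + d\<theta> t x) * \<phi>\<theta> t x \<ge> B\<theta> t x * \<phi>\<theta> t 0))"
  unfolding Let_def
proof (intro conjI allI impI)
  fix t x :: real assume x: "x \<ge> 0"
  show "0 < rpow (\<phi>1 t x) \<theta> * rpow (\<phi>2 t x) (1 - \<theta>)"
    using \<phi>_pos[OF x, of t] by (simp add: rpow_pos)
  show "rpow (\<phi>1 (t + T) x) \<theta> * rpow (\<phi>2 (t + T) x) (1 - \<theta>) = rpow (\<phi>1 t x) \<theta> * rpow (\<phi>2 t x) (1 - \<theta>)"
    using \<phi>_per[OF x] by simp
next
  fix t x :: real assume x: "x \<ge> 0"
  obtain Dt1 Dx1 where h1: "has_partial_t \<phi>1 t x Dt1" "has_partial_x \<phi>1 t x Dx1"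
     "- Dt1 - Dx1 + (d1 t x + \<mu>1) * \<phi>1 t x \<ge> B1 t x * \<phi>1 t 0" using ineq1[OF x] by blast
  obtain Dt2 Dx2 where h2: "has_partial_t \<phi>2 t x Dt2" "has_partial_x \<phi>2 t x Dx2"
     "- Dt2 - Dx2 + (d2 t x + \<mu>2) * \<phi>2 t x \<ge> B2 t x * \<phi>2 t 0" using ineq2[OF x] by blast
  define A where "A = \<phi>1 t x"
  define C where "C = \<phi>2 t x"
  define P where "P = rpow A \<theta> * rpow C (1 - \<theta>)"
  have A: "A > 0" and C: "C > 0" using \<phi>_pos[OF x] by (auto simp: A_def C_def)
  have P: "P > 0" using A C by (simp add: P_def rpow_def)
  have a0: "\<phi>1 t 0 > 0" "\<phi>2 t 0 > 0" using \<phi>_pos[of 0] by auto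
  have B: "B1 t x \<ge> 0" "B2 t x \<ge> 0" "d1 t x \<ge> 0" "d2 t x \<ge> 0" using nonneg[OF x] by auto
  let ?Dt = "(\<theta>* Dt1/A + (1-\<theta>) * Dt2/C) * P"
  let ?Dx = "(\<theta>* Dx1/A + (1-\<theta>) * Dx2/C) * P"
  have pt: "has_partial_t (\<lambda>t x. rpow (\<phi>1 t x) \<theta> * rpow (\<phi>2 t x) (1 - \<theta>)) t x ?Dt"
    unfolding has_partial_t_def A_def C_def P_def
    by (rule deriv_geo[OF h1(1)[unfolded has_partial_t_def] h2(1)[unfolded has_partial_t_def]])
       (use \<phi>_pos[OF x] in auto)
  have px: "has_partial_x (\<lambda>t x. rpow (\<phi>1 t x) \<theta> * rpow (\<phi>2 t x) (1 - \<theta>)) t x ?Dx"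
    unfolding has_partial_x_def A_def C_def P_def
    by (rule deriv_geo[OF h1(2)[unfolded has_partial_x_def] h2(2)[unfolded has_partial_x_def]])
       (use x \<phi>_pos in auto)
  define u where "u = B1 t x * \<phi>1 t 0 / A"
  define v where "v = B2 t x * \<phi>2 t 0 / C"
  have u: "u \<ge> 0" "v \<ge> 0" using B a0 A C by (auto simp: u_def v_def)
  have X1: "(- Dt1 - Dx1 + (d1 t x + \<mu>1) * A) / A \<ge> u"
    using h1(3) A by (simp add: u_def A_def divide_right_mono)
  have X2: "(- Dt2 - Dx2 + (d2 t x + \<mu>2) * C) / C \<ge> v"
    using h2(3) C by (simp add: v_def C_def divide_right_mono)
  have "- ?Dt - ?Dx + (\<theta> * \<mu>1 + (1 - \<theta>) * \<mu>2 + (\<theta> * d1 t x + (1 - \<theta>) * d2 t x)) * P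
      = P * (\<theta> * ((- Dt1 - Dx1 + (d1 t x + \<mu>1) * A) / A) + (1-\<theta>) * ((- Dt2 - Dx2 + (d2 t x + \<mu>2) * C) / C))"
    using A C by (simp add: field_simps)
  also have "\<dots> \<ge> P * (\<theta> * u + (1-\<theta>) * v)"
    using X1 X2 \<theta> P by (intro mult_left_mono add_mono mult_left_mono) auto
  also have "P * (\<theta> * u + (1-\<theta>) * v) \<ge> P * (rpow u \<theta> * rpow v (1-\<theta>))"
    using amgm[OF u \<theta>] P by simp
  also have "P * (rpow u \<theta> * rpow v (1-\<theta>)) = rpow (u * A) \<theta> * rpow (v * C) (1-\<theta>)"
    using u A C by (simp add: P_def rpow_mult)
  also have "\<dots> = (rpow (B1 t x) \<theta> * rpow (B2 t x) (1 - \<theta>)) * (rpow (\<phi>1 t 0) \<theta> * rpow (\<phi>2 t 0) (1 - \<theta>))"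
    using A C B a0 by (simp add: u_def v_def rpow_mult)
  finally show "\<exists>Dt Dx. has_partial_t (\<lambda>t x. rpow (\<phi>1 t x) \<theta> * rpow (\<phi>2 t x) (1 - \<theta>)) t x Dt \<and>
               has_partial_x (\<lambda>t x. rpow (\<phi>1 t x) \<theta> * rpow (\<phi>2 t x) (1 - \<theta>)) t x Dx \<and>
               rpow (B1 t x) \<theta> * rpow (B2 t x) (1 - \<theta>) * (rpow (\<phi>1 t 0) \<theta> * rpow (\<phi>2 t 0) (1 - \<theta>))
               \<le> - Dt - Dx + (\<theta> * \<mu>1 + (1 - \<theta>) * \<mu>2 + (\<theta> * d1 t x + (1 - \<theta>) * d2 t x)) *
                  (rpow (\<phi>1 t x) \<theta> * rpow (\<phi>2 t x) (1 - \<theta>))"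
    using pt px unfolding P_def A_def C_def by blast
qed

end
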